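(* Let $\mathcal{X}\subseteq\mathbb{R}^n$ be a nonempty closed convex set with Euclidean projection $\Pi_{\mathcal{X}}$, let $\Theta\subseteq\mathbb{R}^m$, and let $f:\mathbb{R}^n\times\mathbb{R}^m\to\mathbb{R}$ be differentiable and convex in its first argument. Assume: (A1) there is $G>0$ with $|f(x,\theta)-f(y,\theta)|\le G\|x-y\|$ for all $x,y\in\mathcal{X}$, $\theta\in\Theta$; (A2) there is $L>0$ with $f(y,\theta)\le f(x,\theta)+\nabla_x f(x,\theta)^T(y-x)+\frac{L}{2}\|y-x\|^2$ for all $x,y\in\mathcal{X}$, $\theta\in\Theta$; (A3) there is $\lambda>0$ with $f(y,\theta)\ge f(x,\theta)+\nabla_x f(x,\theta)^T(y-x)+\frac{\lambda}{2}\|y-x\|^2$ for all $x,y\in\mathcal{X}$, $\theta\in\Theta$; (A4) there is $C_\theta>0$ with $\|\nabla_x f(x,\theta_1)-\nabla_x f(x,\theta_2)\|\le C_\theta\|\theta_1-\theta_2\|$ for all $x\in\mathcal{X}$, $\theta_1,\theta_2\in\Theta$. Let $\theta_1,\dots,\theta_T\in\Theta$ and, for $t=2,\dots,T$, let $\hat\theta_t\in\Theta$ be a prediction of $\theta_t$ made from $\theta_1,\dots,\theta_{t-1}$. Fix an integer $k\ge1$, $\eta>0$, $x_1\in\mathcal{X}$, and for $t=1,\dots,T-1$ define $x_{t+1}$ by performing $k$ predicted projected gradient steps: $z^0=x_t$, $z^{j}=\Pi_{\mathcal{X}}\big(z^{j-1}-\eta\nabla_x f(z^{j-1},\hat\theta_{t+1})\big)$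 for $j=1,\dots,k$, and $x_{t+1}=z^k$. If $\eta\le 1/L$, then with $C_{\eta,\lambda}=\sqrt{1-\frac{2\lambda\eta}{1+\eta\lambda}}$, $$\mathbf{Reg}_D(\{x_t\})\le \frac{G\|x_1-x_1^\ast\|}{1-C_{\eta,\lambda}^k}+\frac{G\,C_{\eta,\lambda}^k}{1-C_{\eta,\lambda}^k}\mathcal{P}^\ast+\frac{G\eta C_\theta}{1-C_{\eta,\lambda}}P^\theta .$$
   Context: Write $x_t^\ast=\arg\min_{x\in\mathcal{X}}f(x,\theta_t)$. The dynamic regret is $\mathbf{Reg}_D(\{x_t\})=\sum_{t=1}^T\big(f(x_t,\theta_t)-\min_{x\in\mathcal{X}}f(x,\theta_t)\big)$. The path length is $\mathcal{P}^\ast=\sum_{t=1}^{T-1}\|x_t^\ast-x_{t+1}^\ast\|$, and the parameter prediction regularity is $P^\theta=\sum_{t=2}^T\|\theta_t-\hat\theta_t\|$. All norms are Euclidean. *)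

theory Defs
  imports "HOL-Analysis.Analysis"
begin

definition grad_x :: "('a::euclidean_space \<Rightarrow> 'b \<Rightarrow> real) \<Rightarrow> 'a \<Rightarrow> 'b \<Rightarrow> 'a" where
  "grad_x f x \<theta> = (SOME D. GDERIV (\<lambda>y. f y \<theta>) x :> D)"

definition pgd_step :: "'a::euclidean_space set \<Rightarrow> ('a \<Rightarrow> 'b \<Rightarrow> real) \<Rightarrow> real \<Rightarrow> 'b \<Rightarrow> 'a \<Rightarrow> 'a" where
  "pgd_step X f \<eta> \<theta> z = closest_point X (z - \<eta> *\<^sub>R grad_x f z \<theta>)"

definition xstar :: "'a set \<Rightarrow> ('a \<Rightarrow> 'b \<Rightarrow> real) \<Rightarrow> 'b \<Rightarrow> 'a" where
  "xstar X f \<theta> = arg_min_on (\<lambda>x. f x \<theta>) X"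

definition dyn_regret :: "'a set \<Rightarrow> ('a \<Rightarrow> 'b \<Rightarrow> real) \<Rightarrow> (nat \<Rightarrow> 'a) \<Rightarrow> (nat \<Rightarrow> 'b) \<Rightarrow> nat \<Rightarrow> real" where
  "dyn_regret X f x \<theta> T = (\<Sum>t=1..T. f (x t) (\<theta> t) - (INF y\<in>X. f y (\<theta> t)))"

definition path_length :: "'a::real_normed_vector set \<Rightarrow> ('a \<Rightarrow> 'b \<Rightarrow> real) \<Rightarrow> (nat \<Rightarrow> 'b) \<Rightarrow> nat \<Rightarrow> real" where
  "path_length X f \<theta> T = (\<Sum>t=1..T-1. norm (xstar X f (\<theta> t) - xstar X f (\<theta> (t+1))))"

definition pred_regularity :: "(nat \<Rightarrow> 'b::real_normed_vector) \<Rightarrow> (nat \<Rightarrow> 'b) \<Rightarrow> nat \<Rightarrow> real" where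
  "pred_regularity \<theta> \<theta>h T = (\<Sum>t=2..T. norm (\<theta> t - \<theta>h t))"

end

theory Submission imports Defs begin

lemma xstar_props:
  assumes "\<exists>w\<in>X. \<forall>y\<in>X. f w \<phi> \<le> f y \<phi>"
  shows "xstar X f \<phi> \<in> X" "\<And>y. y \<in> X \<Longrightarrow> f (xstar X f \<phi>) \<phi> \<le> f y \<phi>"
proof -
  have "\<exists>w. is_arg_min (\<lambda>x. f x \<phi>) (\<lambda>x. x \<in> X) w"
    using assms unfolding is_arg_min_def by (meson not_le)
  then have "is_arg_min (\<lambda>x. f x \<phi>) (\<lambda>x. x \<in> X) (xstar X f \<phi>)"
    unfolding xstar_def arg_min_on_def arg_min_def by (rule someI_ex)
  then show "xstar X f \<phi> \<in> X" "\<And>y. y \<in> X \<Longrightarrow> f (xstar X f \<phi>) \<phi> \<le> f y \<phi>"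
    unfolding is_arg_min_def by (auto simp: not_less)
qed

lemma exists_min:
  fixes X :: "'a::euclidean_space set" and h :: "'a \<Rightarrow> real"
  assumes "closed X" "x0 \<in> X" "continuous_on X h" "lam > 0"
    and sc: "\<And>y. y \<in> X \<Longrightarrow> h y \<ge> h x0 + inner g (y - x0) + lam / 2 * (norm (y - x0))\<^sup>2"
  shows "\<exists>w\<in>X. \<forall>y\<in>X. h w \<le> h y"
proof -
  define R where "R = 2 * norm g / lam"
  define K where "K = X \<inter> cball x0 R"
  have "compact K" unfolding K_def using assms(1) by (simp add: closed_Int_compact)
  moreover have "x0 \<in> K" unfolding K_def R_def using assms by auto
  moreover have "continuous_on K h" using assms(3) unfolding K_def
    by (meson continuous_on_subset inf_le1)
  ultimately obtain m where m: "m \<in> K" "\<And>y. y \<in> K \<Longrightarrow> h m \<le> h y"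
    using continuous_attains_inf[of K h] by blast
  have "h m \<le> h y" if "y \<in> X" for y
  proof (cases "y \<in> K")
    case True then show ?thesis using m by auto
  next
    case False
    then have r: "norm (y - x0) > R" using that unfolding K_def by (auto simp: dist_norm norm_minus_commute)
    define r where "r = norm (y - x0)"
    have "inner g (y - x0) \<ge> - (norm g * r)" unfolding r_def
      using norm_cauchy_schwarz[of "-g" "y - x0"] by simp
    moreover have "lam / 2 * r\<^sup>2 \<ge> norm g * r"
    proof -
      have "lam * r \<ge> 2 * norm g" using r assms(4) unfolding r_def R_def
        by (simp add: field_simps)
      then have "lam * r * r \<ge> 2 * norm g * r" using r unfolding r_def
        by (metis mult_right_mono norm_ge_zero)
      then show ?thesis by (simp add: power2_eq_square field_simps)
    qed
    ultimately have "h y \<ge> h x0" using sc[OF that] unfolding r_def by linarith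
    then show ?thesis using m \<open>x0 \<in> K\<close> by fastforce
  qed
  then show ?thesis using m K_def by auto
qed

lemma opt_cond:
  fixes X :: "'a::euclidean_space set" and h :: "'a \<Rightarrow> real"
  assumes "convex X" "w \<in> X" "v \<in> X" "\<And>y. y \<in> X \<Longrightarrow> h w \<le> h y" "L > 0"
    and sm: "\<And>y. y \<in> X \<Longrightarrow> h y \<le> h w + inner gw (y - w) + L / 2 * (norm (y - w))\<^sup>2"
  shows "inner gw (v - w) \<ge> 0"
proof (rule ccontr)
  assume "\<not> ?thesis"
  then have c: "inner gw (v - w) < 0" by simp
  then have "v \<noteq> w" by auto
  define D where "D = (norm (v - w))\<^sup>2"
  have D: "D > 0" using \<open>v \<noteq> w\<close> unfolding D_def by simp
  define t where "t = min 1 (- inner gw (v - w) / (L * D))"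
  have t0: "t > 0" using c D assms(5) unfolding t_def by (simp add: field_simps)
  have t1: "t \<le> 1" unfolding t_def by simp
  have tL: "L * D * t \<le> - inner gw (v - w)" unfolding t_def using D assms(5)
    by (smt (verit, ccfv_SIG) divide_le_eq_1 mult_pos_pos nonzero_mult_div_cancel_left t_def t1 times_divide_eq_right min.cobounded2 mult_le_cancel_left_pos)
  define p where "p = w + t *\<^sub>R (v - w)"
  have "p = (1 - t) *\<^sub>R w + t *\<^sub>R v" unfolding p_def by (simp add: algebra_simps)
  then have "p \<in> X" using assms(1-3) t0 t1 by (simp add: convexD)
  have "h w \<le> h p" using assms(4) \<open>p \<in> X\<close> by simp
  also have "\<dots> \<le> h w + inner gw (p - w) + L / 2 * (norm (p - w))\<^sup>2" using sm \<open>p \<in> X\<close> by simp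
  also have "inner gw (p - w) = t * inner gw (v - w)" unfolding p_def by simp
  also have "(norm (p - w))\<^sup>2 = t\<^sup>2 * D" unfolding p_def D_def using t0 by (simp add: power_mult_distrib)
  finally have "0 \<le> t * inner gw (v - w) + L / 2 * (t\<^sup>2 * D)" by simp
  then have "0 \<le> t * (inner gw (v - w) + L / 2 * t * D)" by (simp add: power2_eq_square algebra_simps)
  then have "0 \<le> inner gw (v - w) + L / 2 * t * D" using t0 by (simp add: zero_le_mult_iff)
  moreover have "L / 2 * t * D > 0" using t0 D assms(5) by simp
  ultimately show False using tL c by (simp add: algebra_simps) 
qed

lemma step_core:
  fixes z u w g :: "'a::real_inner"
  assumes i: "hu \<le> hz + inner g (u - z) + L / 2 * (norm (u - z))\<^sup>2"
    and ii: "hu \<ge> hw + lam / 2 * (norm (u - w))\<^sup>2"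
    and iii: "hw \<ge> hz + inner g (w - z) + lam / 2 * (norm (w - z))\<^sup>2"
    and pr: "inner (z - \<eta> *\<^sub>R g - u) (w - u) \<le> 0"
    and eta: "\<eta> > 0" "\<eta> * L \<le> 1" "L > 0"
  shows "(1 + \<eta> * lam) * (norm (u - w))\<^sup>2 \<le> (1 - \<eta> * lam) * (norm (z - w))\<^sup>2"
proof -
  define a where "a = u - w"
  define b where "b = z - u"
  have zw: "z - w = a + b" unfolding a_def b_def by simp
  have uz: "u - z = - b" unfolding b_def by simp
  have wz: "w - z = - (a + b)" unfolding a_def b_def by simp
  have n1: "(norm (z - w))\<^sup>2 = (norm a)\<^sup>2 + 2 * inner a b + (norm b)\<^sup>2"
    unfolding zw by (simp add: power2_norm_eq_inner inner_add inner_commute)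
  have ip: "inner g (u - z) - inner g (w - z) = inner g a"
    unfolding uz wz by (simp add: inner_add inner_minus_right inner_diff_right)
  have "lam / 2 * (norm a)\<^sup>2 \<le> inner g a - lam / 2 * (norm (z - w))\<^sup>2 + L / 2 * (norm b)\<^sup>2"
    using i ii iii ip unfolding a_def[symmetric] uz
    by (simp add: norm_minus_commute[of w z]) 
  moreover have "L / 2 * (norm b)\<^sup>2 \<le> 1 / (2 * \<eta>) * (norm b)\<^sup>2"
  proof -
    have "L \<le> 1 / \<eta>" using eta by (simp add: field_simps)
    then show ?thesis by (intro mult_right_mono) auto
  qed
  ultimately have "\<eta> * (lam / 2 * (norm a)\<^sup>2) \<le> \<eta> * (inner g a - lam / 2 * (norm (z - w))\<^sup>2 + 1 / (2 * \<eta>) * (norm b)\<^sup>2)"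
    using eta by (intro mult_left_mono) auto
  then have A: "\<eta> * lam * (norm a)\<^sup>2 \<le> 2 * (\<eta> * inner g a) - \<eta> * lam * (norm (z - w))\<^sup>2 + (norm b)\<^sup>2"
  proof -
    have e: "\<eta> * (1 / (2 * \<eta>) * (norm b)\<^sup>2) = (norm b)\<^sup>2 / 2" using eta by simp
    show ?thesis using \<open>\<eta> * (lam / 2 * (norm a)\<^sup>2) \<le> _\<close> unfolding distrib_left right_diff_distrib e
      by (simp add: algebra_simps)
  qed
  have "inner (z - \<eta> *\<^sub>R g - u) (w - u) = - inner b a + \<eta> * inner g a"
    unfolding a_def b_def by (simp add: inner_diff inner_commute algebra_simps)
  then have B: "\<eta> * inner g a \<le> inner a b" using pr by (simp add: inner_commute)
  show ?thesis using A B n1 unfolding a_def[symmetric] by (simp add: algebra_simps)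
qed

theorem corollary1:
  fixes X :: "'a::euclidean_space set" and \<Theta> :: "'b::euclidean_space set"
    and f :: "'a \<Rightarrow> 'b \<Rightarrow> real"
    and G L lam C\<^sub>\<theta> \<eta> :: real and k T :: nat
    and \<theta> \<theta>h :: "nat \<Rightarrow> 'b" and x :: "nat \<Rightarrow> 'a"
  assumes X_ne: "X \<noteq> {}" and X_closed: "closed X" and X_convex: "convex X"
    and f_diff: "\<And>\<phi> x. (\<lambda>y. f y \<phi>) differentiable (at x)"
    and f_convex: "\<And>\<phi>. convex_on UNIV (\<lambda>y. f y \<phi>)"
    and A1: "G > 0" "\<And>x y \<phi>. x \<in> X \<Longrightarrow> y \<in> X \<Longrightarrow> \<phi> \<in> \<Theta> \<Longrightarrow>
              \<bar>f x \<phi> - f y \<phi>\<bar> \<le> G * norm (x - y)"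
    and A2: "L > 0" "\<And>x y \<phi>. x \<in> X \<Longrightarrow> y \<in> X \<Longrightarrow> \<phi> \<in> \<Theta> \<Longrightarrow>
              f y \<phi> \<le> f x \<phi> + inner (grad_x f x \<phi>) (y - x) + L / 2 * (norm (y - x))\<^sup>2"
    and A3: "lam > 0" "\<And>x y \<phi>. x \<in> X \<Longrightarrow> y \<in> X \<Longrightarrow> \<phi> \<in> \<Theta> \<Longrightarrow>
              f y \<phi> \<ge> f x \<phi> + inner (grad_x f x \<phi>) (y - x) + lam / 2 * (norm (y - x))\<^sup>2"
    and A4: "C\<^sub>\<theta> > 0" "\<And>x \<phi>1 \<phi>2. x \<in> X \<Longrightarrow> \<phi>1 \<in> \<Theta> \<Longrightarrow> \<phi>2 \<in> \<Theta> \<Longrightarrow>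
              norm (grad_x f x \<phi>1 - grad_x f x \<phi>2) \<le> C\<^sub>\<theta> * norm (\<phi>1 - \<phi>2)"
    and T_pos: "T \<ge> 1"
    and theta_in: "\<And>t. 1 \<le> t \<Longrightarrow> t \<le> T \<Longrightarrow> \<theta> t \<in> \<Theta>"
    and thetah_in: "\<And>t. 2 \<le> t \<Longrightarrow> t \<le> T \<Longrightarrow> \<theta>h t \<in> \<Theta>"
    and k_pos: "k \<ge> 1" and eta_pos: "\<eta> > 0" and eta_le: "\<eta> \<le> 1 / L"
    and x1: "x 1 \<in> X"
    and x_upd: "\<And>t. 1 \<le> t \<Longrightarrow> t \<le> T - 1 \<Longrightarrow>
              x (t + 1) = (pgd_step X f \<eta> (\<theta>h (t + 1)) ^^ k) (x t)"
  shows "let C = sqrt (1 - 2 * lam * \<eta> / (1 + \<eta> * lam)) in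
         dyn_regret X f x \<theta> T
           \<le> G * norm (x 1 - xstar X f (\<theta> 1)) / (1 - C ^ k)
             + G * C ^ k / (1 - C ^ k) * path_length X f \<theta> T
             + G * \<eta> * C\<^sub>\<theta> / (1 - C) * pred_regularity \<theta> \<theta>h T"
proof -
  define C where "C = sqrt (1 - 2 * lam * \<eta> / (1 + \<eta> * lam))"
  define a where "a = \<eta> * lam"
  have a0: "a > 0" unfolding a_def using eta_pos A3 by simp
  define P where "P = pgd_step X f \<eta>"
  define xs where "xs = (\<lambda>\<phi>. xstar X f \<phi>)"
  have C1: "1 - C > 0"
  proof -
    have "1 - 2 * lam * \<eta> / (1 + \<eta> * lam) < 1" using a0 unfolding a_def
      by (simp add: mult.commute)
    then show ?thesis unfolding C_def by simp
  qed
  have minex: "\<exists>w\<in>X. \<forall>y\<in>X. f w \<phi> \<le> f y \<phi>" if "\<phi> \<in> \<Theta>" for \<phi>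
  proof -
    obtain x0 where x0: "x0 \<in> X" using X_ne by auto
    have cont: "continuous_on X (\<lambda>y. f y \<phi>)"
      using f_diff differentiable_imp_continuous_within continuous_at_imp_continuous_on by blast
    show ?thesis
      by (rule exists_min[OF X_closed x0 cont A3(1), of "grad_x f x0 \<phi>"]) (use A3(2) x0 that in auto)
  qed
  have xs_in: "xs \<phi> \<in> X" and xs_min: "\<And>y. y \<in> X \<Longrightarrow> f (xs \<phi>) \<phi> \<le> f y \<phi>" if "\<phi> \<in> \<Theta>" for \<phi>
    using xstar_props[of X f \<phi>, OF minex[OF that]] unfolding xs_def by auto
  have opt: "inner (grad_x f (xs \<phi>) \<phi>) (v - xs \<phi>) \<ge> 0" if "\<phi> \<in> \<Theta>" "v \<in> X" for \<phi> v
    by (rule opt_cond[where h="\<lambda>y. f y \<phi>", OF X_convex xs_in[OF that(1)] that(2) xs_min[OF that(1)] A2(1)])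
       (use A2(2) xs_in[OF that(1)] that in auto)
  have P_in: "P \<phi> z \<in> X" for \<phi> z
    unfolding P_def pgd_step_def using closest_point_in_set[OF X_closed X_ne] by simp
  have iter_in: "(P \<phi> ^^ j) z \<in> X" if "z \<in> X" for \<phi> z j
    using that P_in by (induction j) auto
  have step: "(1 + a) * (norm (P \<phi> z - xs \<phi>))\<^sup>2 \<le> (1 - a) * (norm (z - xs \<phi>))\<^sup>2"
    if "\<phi> \<in> \<Theta>" "z \<in> X" for \<phi> z
  proof -
    let ?u = "P \<phi> z" and ?w = "xs \<phi>" and ?g = "grad_x f z \<phi>"
    have u: "?u \<in> X" by (rule P_in)
    have w: "?w \<in> X" by (rule xs_in[OF that(1)])
    have ii: "f ?u \<phi> \<ge> f ?w \<phi> + lam / 2 * (norm (?u - ?w))\<^sup>2"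
      using A3(2)[OF w u that(1)] opt[OF that(1) u] by simp
    have pr: "inner (z - \<eta> *\<^sub>R ?g - ?u) (?w - ?u) \<le> 0"
      unfolding P_def pgd_step_def by (rule closest_point_dot[OF X_convex X_closed w])
    have eL: "\<eta> * L \<le> 1" using eta_le A2(1) by (simp add: field_simps)
    show ?thesis unfolding a_def
      by (rule step_core[OF A2(2)[OF that(2) u that(1)] ii A3(2)[OF that(2) w that(1)] pr eta_pos eL A2(1)])
  qed
  have pert: "norm (P \<phi> z - P \<psi> z) \<le> \<eta> * C\<^sub>\<theta> * norm (\<phi> - \<psi>)"
    if "\<phi> \<in> \<Theta>" "\<psi> \<in> \<Theta>" "z \<in> X" for \<phi> \<psi> z
  proof -
    have "norm (P \<phi> z - P \<psi> z) \<le> norm ((z - \<eta> *\<^sub>R grad_x f z \<phi>) - (z - \<eta> *\<^sub>R grad_x f z \<psi>))"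
      unfolding P_def pgd_step_def using closest_point_lipschitz[OF X_convex X_closed X_ne,
        of "z - \<eta> *\<^sub>R grad_x f z \<phi>" "z - \<eta> *\<^sub>R grad_x f z \<psi>"]
      by (simp only: dist_norm)
    also have "\<dots> = \<eta> * norm (grad_x f z \<phi> - grad_x f z \<psi>)"
      using eta_pos by (simp add: scaleR_diff_right[symmetric] norm_minus_commute)
    also have "\<dots> \<le> \<eta> * (C\<^sub>\<theta> * norm (\<phi> - \<psi>))"
      using A4(2)[OF that(3,1,2)] eta_pos by (intro mult_left_mono) auto
    finally show ?thesis by simp
  qed
  have x_in: "x t \<in> X" if "1 \<le> t" "t \<le> T" for t
    using that
  proof (induction t)
    case 0 then show ?case by simp
  next
    case (Suc t)
    show ?case
    proof (cases "t = 0")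
      case True then show ?thesis using x1 by simp
    next
      case False
      then have "x (t + 1) = (P (\<theta>h (t + 1)) ^^ k) (x t)" using x_upd[of t] Suc.prems P_def by simp
      then show ?thesis using iter_in Suc False by simp
    qed
  qed
  define d where "d = (\<lambda>t. norm (x t - xs (\<theta> t)))"
  define p where "p = (\<lambda>t. norm (xs (\<theta> t) - xs (\<theta> (t + 1))))"
  define e where "e = (\<lambda>t. norm (\<theta> t - \<theta>h t))"
  define K where "K = \<eta> * C\<^sub>\<theta> / (1 - C)"
  have K0: "K \<ge> 0" unfolding K_def using C1 eta_pos A4(1) by simp
  have e0: "pred_regularity \<theta> \<theta>h T \<ge> 0" unfolding pred_regularity_def by (simp add: sum_nonneg)
  have reg_term: "f (x t) (\<theta> t) - (INF y\<in>X. f y (\<theta> t)) \<le> G * d t" if "1 \<le> t" "t \<le> T" for t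
  proof -
    have th: "\<theta> t \<in> \<Theta>" using theta_in that by simp
    have "(INF y\<in>X. f y (\<theta> t)) = f (xs (\<theta> t)) (\<theta> t)"
      by (rule cInf_eq_minimum) (use xs_in[OF th] xs_min[OF th] in auto)
    moreover have "\<bar>f (x t) (\<theta> t) - f (xs (\<theta> t)) (\<theta> t)\<bar> \<le> G * d t"
      unfolding d_def by (rule A1(2)[OF x_in[OF that] xs_in[OF th] th])
    ultimately show ?thesis by simp
  qed
  have reg: "dyn_regret X f x \<theta> T \<le> G * (\<Sum>t=1..T. d t)"
    unfolding dyn_regret_def sum_distrib_left by (rule sum_mono) (use reg_term in auto)
  show ?thesis
  proof (cases "a \<le> 1")
    case True
    have C0: "C \<ge> 0" unfolding C_def using True a0 unfolding a_def
      by (simp add: field_simps)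
    have Csq: "C\<^sup>2 = (1 - a) / (1 + a)" unfolding C_def using True a0 unfolding a_def
      by (simp add: field_simps)
    have contr: "norm (P \<phi> z - xs \<phi>) \<le> C * norm (z - xs \<phi>)" if "\<phi> \<in> \<Theta>" "z \<in> X" for \<phi> z
    proof -
      have "(norm (P \<phi> z - xs \<phi>))\<^sup>2 \<le> (1 - a) / (1 + a) * (norm (z - xs \<phi>))\<^sup>2"
        using step[OF that] a0 by (simp add: field_simps)
      also have "\<dots> = (C * norm (z - xs \<phi>))\<^sup>2" by (simp only: power_mult_distrib Csq)
      finally have sq: "(norm (P \<phi> z - xs \<phi>))\<^sup>2 \<le> (C * norm (z - xs \<phi>))\<^sup>2" .
      have "0 \<le> C * norm (z - xs \<phi>)" using C0 by simp
      then show ?thesis using sq by (rule power2_le_imp_le[rotated])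
    qed
    have iter: "norm ((P \<psi> ^^ j) z - xs \<phi>) \<le> C ^ j * norm (z - xs \<phi>) + K * (1 - C ^ j) * norm (\<phi> - \<psi>)"
      if "\<phi> \<in> \<Theta>" "\<psi> \<in> \<Theta>" "z \<in> X" for \<phi> \<psi> z j
    proof (induction j)
      case 0 then show ?case by simp
    next
      case (Suc j)
      let ?z = "(P \<psi> ^^ j) z"
      have zin: "?z \<in> X" using iter_in that(3) by simp
      have "norm ((P \<psi> ^^ Suc j) z - xs \<phi>) \<le> norm (P \<psi> ?z - P \<phi> ?z) + norm (P \<phi> ?z - xs \<phi>)"
        using norm_triangle_ineq[of "P \<psi> ?z - P \<phi> ?z" "P \<phi> ?z - xs \<phi>"] by simp
      also have "\<dots> \<le> \<eta> * C\<^sub>\<theta> * norm (\<phi> - \<psi>) + C * norm (?z - xs \<phi>)"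
        using pert[OF that(2,1) zin] contr[OF that(1) zin] by (simp add: norm_minus_commute)
      also have "\<dots> \<le> \<eta> * C\<^sub>\<theta> * norm (\<phi> - \<psi>) + C * (C ^ j * norm (z - xs \<phi>) + K * (1 - C ^ j) * norm (\<phi> - \<psi>))"
        using Suc C0 by (intro add_left_mono mult_left_mono) auto
      also have "\<dots> = C ^ Suc j * norm (z - xs \<phi>) + K * (1 - C ^ Suc j) * norm (\<phi> - \<psi>)"
        using C1 unfolding K_def by (simp add: field_simps)
      finally show ?case .
    qed
    have rec: "d (t + 1) \<le> C ^ k * (d t + p t) + K * (1 - C ^ k) * e (t + 1)"
      if "1 \<le> t" "t \<le> T - 1" for t
    proof -
      have th1: "\<theta> (t + 1) \<in> \<Theta>" and th: "\<theta> t \<in> \<Theta>" and thh: "\<theta>h (t + 1) \<in> \<Theta>"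
        using that theta_in thetah_in by auto
      have xt: "x t \<in> X" using x_in that by simp
      have "d (t + 1) \<le> C ^ k * norm (x t - xs (\<theta> (t + 1))) + K * (1 - C ^ k) * e (t + 1)"
        unfolding d_def e_def using x_upd[OF that] iter[OF th1 thh xt, of k] by (simp add: P_def)
      also have "norm (x t - xs (\<theta> (t + 1))) \<le> d t + p t"
        unfolding d_def p_def using norm_triangle_ineq[of "x t - xs (\<theta> t)" "xs (\<theta> t) - xs (\<theta> (t+1))"] by simp
      then have "C ^ k * norm (x t - xs (\<theta> (t + 1))) \<le> C ^ k * (d t + p t)"
        using C0 by (intro mult_left_mono) auto
      finally show ?thesis by simp
    qed
    define S where "S = (\<Sum>t=1..T. d t)"
    have shift: "(\<Sum>t=2..T. h t) = (\<Sum>t=1..T-1. h (t + 1))" for h :: "nat \<Rightarrow> real"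
      using sum.shift_bounds_cl_nat_ivl[of h 1 1 "T - 1"] T_pos by (simp add: numeral_2_eq_2)
    have S1: "S = d 1 + (\<Sum>t=1..T-1. d (t + 1))"
      unfolding S_def using sum.atLeast_Suc_atMost[of 1 T d] T_pos shift[of d] by (simp add: numeral_2_eq_2)
    have S2: "(\<Sum>t=1..T-1. d t) \<le> S"
      unfolding S_def d_def by (rule sum_mono2) auto
    have "(\<Sum>t=1..T-1. d (t + 1)) \<le> (\<Sum>t=1..T-1. C ^ k * d t + C ^ k * p t + K * (1 - C ^ k) * e (t + 1))"
      by (rule sum_mono) (use rec in \<open>auto simp: algebra_simps\<close>)
    also have "\<dots> = C ^ k * (\<Sum>t=1..T-1. d t) + C ^ k * path_length X f \<theta> T + K * (1 - C ^ k) * pred_regularity \<theta> \<theta>h T"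
      unfolding path_length_def pred_regularity_def shift[of "\<lambda>t. norm (\<theta> t - \<theta>h t)"]
      by (simp add: sum.distrib sum_distrib_left p_def e_def xs_def)
    finally have "S \<le> d 1 + C ^ k * (\<Sum>t=1..T-1. d t) + C ^ k * path_length X f \<theta> T + K * (1 - C ^ k) * pred_regularity \<theta> \<theta>h T"
      using S1 by simp
    moreover have "C ^ k * (\<Sum>t=1..T-1. d t) \<le> C ^ k * S" using S2 C0 by (intro mult_left_mono) auto
    ultimately have main: "(1 - C ^ k) * S \<le> d 1 + C ^ k * path_length X f \<theta> T + (1 - C ^ k) * (K * pred_regularity \<theta> \<theta>h T)"
      by (simp add: algebra_simps)
    have Ck: "C ^ k < 1" using C0 C1 k_pos by (simp add: power_less_one_iff)
    then have q: "1 - C ^ k > 0" by simp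
    have "S \<le> (d 1 + C ^ k * path_length X f \<theta> T) / (1 - C ^ k) + K * pred_regularity \<theta> \<theta>h T"
      using main q by (simp add: field_simps)
    then have "G * S \<le> G * ((d 1 + C ^ k * path_length X f \<theta> T) / (1 - C ^ k) + K * pred_regularity \<theta> \<theta>h T)"
      using A1(1) by (intro mult_left_mono) auto
    also have "\<dots> = G * norm (x 1 - xstar X f (\<theta> 1)) / (1 - C ^ k)
             + G * C ^ k / (1 - C ^ k) * path_length X f \<theta> T
             + G * \<eta> * C\<^sub>\<theta> / (1 - C) * pred_regularity \<theta> \<theta>h T"
      unfolding K_def d_def xs_def by (simp add: field_simps add_divide_distrib)
    finally show ?thesis using reg unfolding Let_def C_def S_def by simp
  next
    case False
    have triv: "z = xs \<phi>" if "\<phi> \<in> \<Theta>" "z \<in> X" for \<phi> z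
    proof -
      have "(1 + a) * (norm (P \<phi> z - xs \<phi>))\<^sup>2 \<ge> 0" using a0 by simp
      then have "(1 - a) * (norm (z - xs \<phi>))\<^sup>2 \<ge> 0" using step[OF that] by linarith
      then have "(norm (z - xs \<phi>))\<^sup>2 \<le> 0" using False by (simp add: zero_le_mult_iff)
      then show ?thesis by simp
    qed
    have th1: "\<theta> 1 \<in> \<Theta>" using theta_in T_pos by simp
    have d0: "d t = 0" if "1 \<le> t" "t \<le> T" for t
      unfolding d_def using triv[OF theta_in[OF that] x_in[OF that]] by simp
    have "dyn_regret X f x \<theta> T \<le> 0" using reg d0 by simp
    moreover have "path_length X f \<theta> T = 0" unfolding path_length_def
    proof (rule sum.neutral, rule ballI)
      fix t assume t: "t \<in> {1..T-1}"
      have "xstar X f (\<theta> t) = xstar X f (\<theta> 1)" "xstar X f (\<theta> (t+1)) = xstar X f (\<theta> 1)"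
        using triv[OF th1 xs_in[OF theta_in[of t]]] triv[OF th1 xs_in[OF theta_in[of "t+1"]]] t
        unfolding xs_def by auto
      then show "norm (xstar X f (\<theta> t) - xstar X f (\<theta> (t + 1))) = 0" by simp
    qed
    moreover have "norm (x 1 - xstar X f (\<theta> 1)) = 0" using d0[of 1] T_pos unfolding d_def xs_def by simp
    moreover have "G * \<eta> * C\<^sub>\<theta> / (1 - C) * pred_regularity \<theta> \<theta>h T \<ge> 0"
      using A1(1) eta_pos A4(1) C1 e0 by simp
    ultimately show ?thesis unfolding Let_def C_def by simp
  qed
qed

end
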